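(* Let $\mathbf{I}=\{1,\dots,N\}$ and assume $\sup_{i}\sum_{v\in\mathbf{V}^i}P(v)\lambda^i(v)<1$. Assume further that there exists $R>0$ such that for all positive vectors $\theta\in B(0,R)$, $$\sup_i\phi_i(\theta)=\sup_i\sum_{j=1}^N\log\Big(\sum_{v\in\mathbf{V}^i}\lambda^i(v)\exp\big[(e^{\theta_j}-1)\Gamma^j\mu(p_j(v))\big]\Big)<\infty.$$ Then: 1. There exists $r\in(0,R)$ such that for all $\theta\in B(0,r)$, $\Phi_i(\theta)<\infty$ for all $i$, and $\Phi(\theta)=\theta+\phi(\Phi(\theta))$. 2. For $0\le\vartheta<r$ there exists a constant $c_0$ (depending on $i$ and the offspring law) such that for all $x>0$, $$\mathbb{P}_i\big(W^i>\mathbb{E}_i(W^i)+x\big)\le c_0e^{-\vartheta x}.$$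
   Context: For each $i\in\{1,\dots,N\}$, $\Gamma^i>0$, $\mathbf{V}^i$ is a countable family of finite neighborhoods (Borel subsets of $\{1,\dots,N\}\times(-\infty,0)$ with bounded time extent) and $\lambda^i$ is a probability on $\mathbf{V}^i$; $\mu$ is Lebesgue measure, $p_j(v)=\{s:(j,s)\in v\}$, and $P(v)=\sum_{j}\Gamma^j\mu(p_j(v))$. Consider the multitype branching process in which each particle of type $i$, independently of everything else, picks a neighborhood $V\sim\lambda^i$ and then, given $V=v$, produces $X^i_j$ children of type $j$, where $X^i_j$ has Poisson law with mean $\Gamma^j\mu(p_j(v))$ (independently over $j$ given $V$); $X^i=(X^i_1,\dots,X^i_N)$. Under $\mathbb{P}_i$ the process starts from one particle of type $i$; $K^i(n)\in\mathbb{N}^N$ is the vector of numbers of particles of each type in generation $n$, $K^i(0)=e_i$; $W^i(\infty)=\sum_{k\ge0}K^i(k)$ and $W^i=\sum_jW^i_j(\infty)$ is the total number of particles. Define $\phi_i(\theta)=\log\mathbb{E}_i(e^{\theta^TX^i})$, $\phi=(\phi_1,\dots,\phi_N)^T$, $\Phi_i(\theta)=\log\mathbb{E}_i(e^{\theta^TW^i(\infty)})$, $\Phi=(\Phi_1,\dots,\Phi_N)^T$. $B(0,r)$ is the open ball of radius $r$ for $\|x\|_\infty=\max_i|x_i|$; a positive vector has all components positive. *)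

theory Defs
  imports "HOL-Probability.Probability"
begin

definition pois :: "real \<Rightarrow> nat pmf" where
  "pois a = (if 0 < a then poisson_pmf a else return_pmf 0)"

definition psec :: "nat \<Rightarrow> (nat \<times> real) set \<Rightarrow> real set" where
  "psec j v = {s. (j, s) \<in> v}"

definition Pv :: "nat \<Rightarrow> (nat \<Rightarrow> real) \<Rightarrow> (nat \<times> real) set \<Rightarrow> real" where
  "Pv N Gam v = (\<Sum>j\<in>{1..N}. Gam j * measure lborel (psec j v))"

definition offspring :: "nat \<Rightarrow> (nat \<Rightarrow> real) \<Rightarrow> (nat \<Rightarrow> (nat \<times> real) set pmf)
    \<Rightarrow> nat \<Rightarrow> (nat \<Rightarrow> nat) pmf" where
  "offspring N Gam lam i =
     bind_pmf (lam i) (\<lambda>v. Pi_pmf {1..N} 0 (\<lambda>j. pois (Gam j * measure lborel (psec j v))))"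

text \<open>Ulam--Harris labels: a particle is a list of (type, index) steps from the root.
  The type of the root is i, the type of any other particle is the type recorded
  in its last step.\<close>
definition ptype :: "nat \<Rightarrow> (nat \<times> nat) list \<Rightarrow> nat" where
  "ptype i u = (if u = [] then i else fst (last u))"

text \<open>The branching process under P_i: independent offspring vectors omega(u) for
  every potential particle u, with law of X^(type u).\<close>
definition GW :: "nat \<Rightarrow> (nat \<Rightarrow> real) \<Rightarrow> (nat \<Rightarrow> (nat \<times> real) set pmf)
    \<Rightarrow> nat \<Rightarrow> ((nat \<times> nat) list \<Rightarrow> nat \<Rightarrow> nat) measure" where
  "GW N Gam lam i =
     PiM UNIV (\<lambda>u. measure_pmf (offspring N Gam lam (ptype i u)))"

definition alive :: "nat \<Rightarrow> ((nat \<times> nat) list \<Rightarrow> nat \<Rightarrow> nat) \<Rightarrow> (nat \<times> nat) list \<Rightarrow> bool" where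
  "alive N \<omega> u \<longleftrightarrow>
     (\<forall>n < length u. fst (u ! n) \<in> {1..N} \<and> snd (u ! n) < \<omega> (take n u) (fst (u ! n)))"

definition Kgen :: "nat \<Rightarrow> nat \<Rightarrow> nat \<Rightarrow> nat \<Rightarrow> ((nat \<times> nat) list \<Rightarrow> nat \<Rightarrow> nat) \<Rightarrow> nat" where
  "Kgen N i n j \<omega> = card {u. alive N \<omega> u \<and> length u = n \<and> ptype i u = j}"

text \<open>W^i_j(infinity) = sum over k of K^i(k)_j: total number of type-j particles
  (card of an infinite set is 0; W is a.s. finite under the hypotheses).\<close>
definition Wvec :: "nat \<Rightarrow> nat \<Rightarrow> nat \<Rightarrow> ((nat \<times> nat) list \<Rightarrow> nat \<Rightarrow> nat) \<Rightarrow> nat" where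
  "Wvec N i j \<omega> = card {u. alive N \<omega> u \<and> ptype i u = j}"

definition Wtot :: "nat \<Rightarrow> nat \<Rightarrow> ((nat \<times> nat) list \<Rightarrow> nat \<Rightarrow> nat) \<Rightarrow> nat" where
  "Wtot N i \<omega> = (\<Sum>j\<in>{1..N}. Wvec N i j \<omega>)"

definition mgfX :: "nat \<Rightarrow> (nat \<Rightarrow> real) \<Rightarrow> (nat \<Rightarrow> (nat \<times> real) set pmf)
    \<Rightarrow> nat \<Rightarrow> (nat \<Rightarrow> real) \<Rightarrow> ennreal" where
  "mgfX N Gam lam i \<theta> =
     (\<integral>\<^sup>+ x. ennreal (exp (\<Sum>j\<in>{1..N}. \<theta> j * real (x j))) \<partial>measure_pmf (offspring N Gam lam i))"

definition mgfW :: "nat \<Rightarrow> (nat \<Rightarrow> real) \<Rightarrow> (nat \<Rightarrow> (nat \<times> real) set pmf)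
    \<Rightarrow> nat \<Rightarrow> (nat \<Rightarrow> real) \<Rightarrow> ennreal" where
  "mgfW N Gam lam i \<theta> =
     (\<integral>\<^sup>+ \<omega>. ennreal (exp (\<Sum>j\<in>{1..N}. \<theta> j * real (Wvec N i j \<omega>))) \<partial>GW N Gam lam i)"

text \<open>phi_i and Phi_i (log of the above; meaningful where finite).\<close>
definition phi :: "nat \<Rightarrow> (nat \<Rightarrow> real) \<Rightarrow> (nat \<Rightarrow> (nat \<times> real) set pmf)
    \<Rightarrow> nat \<Rightarrow> (nat \<Rightarrow> real) \<Rightarrow> real" where
  "phi N Gam lam i \<theta> = ln (enn2real (mgfX N Gam lam i \<theta>))"

definition Phi :: "nat \<Rightarrow> (nat \<Rightarrow> real) \<Rightarrow> (nat \<Rightarrow> (nat \<times> real) set pmf)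
    \<Rightarrow> nat \<Rightarrow> (nat \<Rightarrow> real) \<Rightarrow> real" where
  "Phi N Gam lam i \<theta> = ln (enn2real (mgfW N Gam lam i \<theta>))"

end

theory Submission
  imports Defs
begin

type_synonym om = "(nat \<times> nat) list \<Rightarrow> nat \<Rightarrow> nat"

definition shift :: "nat \<times> nat \<Rightarrow> om \<Rightarrow> om" where "shift c \<omega> = (\<lambda>u. \<omega> (c#u))"

lemma ptype_Cons: "ptype i (c#u) = ptype (fst c) u"
  by (simp add: ptype_def)

lemma alive_Nil[simp]: "alive N \<omega> []" by (simp add: alive_def)

lemma alive_Cons: "alive N \<omega> (c#u) \<longleftrightarrow> fst c \<in> {1..N} \<and> snd c < \<omega> [] (fst c) \<and> alive N (shift c \<omega>) u"
proof -
  have "alive N \<omega> (c#u) \<longleftrightarrow> (\<forall>n < Suc (length u). fst ((c#u) ! n) \<in> {1..N} \<and> snd ((c#u) ! n) < \<omega> (take n (c#u)) (fst ((c#u) ! n)))"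
    by (simp add: alive_def)
  also have "\<dots> \<longleftrightarrow> (fst c \<in> {1..N} \<and> snd c < \<omega> [] (fst c)) \<and> (\<forall>n < length u. fst (u ! n) \<in> {1..N} \<and> snd (u ! n) < \<omega> (c # take n u) (fst (u ! n)))"
    by (simp only: All_less_Suc2) simp
  finally show ?thesis by (simp add: alive_def shift_def)
qed


definition Cset :: "nat \<Rightarrow> (nat \<Rightarrow> nat) \<Rightarrow> (nat \<times> nat) set" where
  "Cset N x = Sigma {1..N} (\<lambda>j. {..<x j})"

lemma finite_Cset[simp]: "finite (Cset N x)" by (simp add: Cset_def)

lemma mem_Cset: "c \<in> Cset N x \<longleftrightarrow> fst c \<in> {1..N} \<and> snd c < x (fst c)"
  by (cases c) (auto simp: Cset_def)

definition Aset :: "nat \<Rightarrow> om \<Rightarrow> (nat \<times> nat) list set" where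
  "Aset N \<omega> = {u. alive N \<omega> u}"

definition An :: "nat \<Rightarrow> nat \<Rightarrow> om \<Rightarrow> (nat \<times> nat) list set" where
  "An N n \<omega> = {u. alive N \<omega> u \<and> length u < n}"

lemma An_0[simp]: "An N 0 \<omega> = {}" by (simp add: An_def)

lemma An_Suc: "An N (Suc n) \<omega> = insert [] (\<Union>c\<in>Cset N (\<omega> []). Cons c ` An N n (shift c \<omega>))"
proof (rule set_eqI)
  fix u show "u \<in> An N (Suc n) \<omega> \<longleftrightarrow> u \<in> insert [] (\<Union>c\<in>Cset N (\<omega> []). Cons c ` An N n (shift c \<omega>))"
    by (cases u) (auto simp: An_def alive_Cons mem_Cset)
qed

lemma Aset_decomp: "Aset N \<omega> = insert [] (\<Union>c\<in>Cset N (\<omega> []). Cons c ` Aset N (shift c \<omega>))"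
proof (rule set_eqI)
  fix u show "u \<in> Aset N \<omega> \<longleftrightarrow> u \<in> insert [] (\<Union>c\<in>Cset N (\<omega> []). Cons c ` Aset N (shift c \<omega>))"
    by (cases u) (auto simp: Aset_def alive_Cons mem_Cset)
qed

lemma finite_An[simp]: "finite (An N n \<omega>)"
  by (induction n arbitrary: \<omega>) (auto simp: An_Suc)

lemma An_mono: "n \<le> m \<Longrightarrow> An N n \<omega> \<subseteq> An N m \<omega>"
  by (auto simp: An_def)

lemma An_sub_Aset: "An N n \<omega> \<subseteq> Aset N \<omega>"
  by (auto simp: An_def Aset_def)

lemma Aset_finite_An: "finite (Aset N \<omega>) \<Longrightarrow> \<exists>n0. \<forall>n\<ge>n0. An N n \<omega> = Aset N \<omega>"
proof -
  assume f: "finite (Aset N \<omega>)"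
  define n0 where "n0 = Suc (Max (length ` Aset N \<omega>))"
  have "\<forall>u\<in>Aset N \<omega>. length u < n0" using f unfolding n0_def
    by (auto simp: less_Suc_eq_le intro!: Max_ge)
  then have "\<forall>n\<ge>n0. An N n \<omega> = Aset N \<omega>"
    by (auto simp: An_def Aset_def)
  then show ?thesis by blast
qed

lemma finite_Aset_child:
  assumes "finite (Aset N \<omega>)" "c \<in> Cset N (\<omega> [])"
  shows "finite (Aset N (shift c \<omega>))"
proof -
  have "Cons c ` Aset N (shift c \<omega>) \<subseteq> Aset N \<omega>"
    using assms(2) by (subst (2) Aset_decomp) auto
  then have "finite (Cons c ` Aset N (shift c \<omega>))" using assms(1) finite_subset by blast
  then show ?thesis by (rule finite_imageD) simp
qed

lemma Aset_bounded_finite: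
  assumes "\<And>n. card (An N n \<omega>) \<le> K"
  shows "finite (Aset N \<omega>)"
proof (rule ccontr)
  assume inf: "infinite (Aset N \<omega>)"
  then obtain S where S: "S \<subseteq> Aset N \<omega>" "finite S" "card S = Suc K"
    by (meson infinite_arbitrarily_large)
  define n where "n = Suc (Max (length ` S))"
  have "S \<subseteq> An N n \<omega>" using S unfolding n_def An_def Aset_def
    by (auto simp: less_Suc_eq_le intro!: Max_ge)
  then have "card S \<le> card (An N n \<omega>)" by (intro card_mono) auto
  with assms[of n] S show False by simp
qed

primrec Tn :: "nat \<Rightarrow> nat \<Rightarrow> (nat \<Rightarrow> real) \<Rightarrow> nat \<Rightarrow> om \<Rightarrow> real" where
  "Tn N 0 \<theta> i \<omega> = 0"
| "Tn N (Suc n) \<theta> i \<omega> = \<theta> i + (\<Sum>j\<in>{1..N}. \<Sum>k<\<omega> [] j. Tn N n \<theta> j (shift (j,k) \<omega>))"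

lemma sum_Cset: "(\<Sum>c\<in>Cset N x. f c) = (\<Sum>j\<in>{1..N}. \<Sum>k<x j. f (j,k))"
  unfolding Cset_def by (subst sum.Sigma) auto

lemma prod_Cset: "(\<Prod>c\<in>Cset N x. f c) = (\<Prod>j\<in>{1..N}. \<Prod>k<x j. f (j,k))"
  unfolding Cset_def by (subst prod.Sigma) auto

lemma sum_Cons_image: "(\<Sum>u\<in>Cons c ` S. f u) = (\<Sum>u\<in>S. f (c#u))"
  by (simp add: sum.reindex inj_on_def)

lemma Tn_sum: "Tn N n \<theta> i \<omega> = (\<Sum>u\<in>An N n \<omega>. \<theta> (ptype i u))"
proof (induction n arbitrary: i \<omega>)
  case 0 then show ?case by simp
next
  case (Suc n)
  have disj: "disjoint_family_on (\<lambda>c. Cons c ` An N n (shift c \<omega>)) (Cset N (\<omega> []))"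
    by (auto simp: disjoint_family_on_def)
  have "(\<Sum>u\<in>An N (Suc n) \<omega>. \<theta> (ptype i u)) =
     \<theta> i + (\<Sum>u\<in>(\<Union>c\<in>Cset N (\<omega> []). Cons c ` An N n (shift c \<omega>)). \<theta> (ptype i u))"
    unfolding An_Suc by (subst sum.insert) (auto simp: ptype_def)
  also have "(\<Sum>u\<in>(\<Union>c\<in>Cset N (\<omega> []). Cons c ` An N n (shift c \<omega>)). \<theta> (ptype i u))
     = (\<Sum>c\<in>Cset N (\<omega> []). \<Sum>u\<in>Cons c ` An N n (shift c \<omega>). \<theta> (ptype i u))"
    using disj by (subst sum.UNION_disjoint_family) auto
  also have "\<dots> = (\<Sum>c\<in>Cset N (\<omega> []). \<Sum>u\<in>An N n (shift c \<omega>). \<theta> (ptype (fst c) u))"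
    by (rule sum.cong[OF refl]) (simp add: sum_Cons_image ptype_Cons)
  also have "\<dots> = (\<Sum>c\<in>Cset N (\<omega> []). Tn N n \<theta> (fst c) (shift c \<omega>))"
    using Suc by simp
  finally show ?case by (simp add: sum_Cset)
qed

lemma Tn_mono_theta:
  assumes "\<And>j. j \<in> {1..N} \<Longrightarrow> \<theta> j \<le> \<theta>' j" "i \<in> {1..N}"
  shows "Tn N n \<theta> i \<omega> \<le> Tn N n \<theta>' i \<omega>"
proof -
  have "\<theta> (ptype i u) \<le> \<theta>' (ptype i u)" if "u \<in> An N n \<omega>" for u
  proof -
    have "ptype i u \<in> {1..N}"
    proof (cases u rule: rev_cases)
      case Nil then show ?thesis using assms by (simp add: ptype_def)
    next
      case (snoc v c)
      then have "alive N \<omega> (v @ [c])" using that by (simp add: An_def)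
      then have "fst c \<in> {1..N}" unfolding alive_def
        by (auto dest!: spec[of _ "length v"])
      then show ?thesis using snoc by (simp add: ptype_def)
    qed
    then show ?thesis using assms by simp
  qed
  then show ?thesis unfolding Tn_sum by (rule sum_mono)
qed


lemma ptype_alive:
  assumes "alive N \<omega> u" "i \<in> {1..N}" shows "ptype i u \<in> {1..N}"
proof (cases u rule: rev_cases)
  case Nil then show ?thesis using assms by (simp add: ptype_def)
next
  case (snoc v c)
  then have "alive N \<omega> (v @ [c])" using assms by simp
  then have "fst c \<in> {1..N}" unfolding alive_def
    by (auto dest!: spec[of _ "length v"])
  then show ?thesis using snoc by (simp add: ptype_def)
qed

lemma Wsum:
  assumes "finite (Aset N \<omega>)" "i \<in> {1..N}"
  shows "(\<Sum>j\<in>{1..N}. \<theta> j * real (Wvec N i j \<omega>)) = (\<Sum>u\<in>Aset N \<omega>. \<theta> (ptype i u))"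
proof -
  have "(\<Sum>u\<in>Aset N \<omega>. \<theta> (ptype i u)) = (\<Sum>j\<in>{1..N}. \<Sum>u\<in>{u\<in>Aset N \<omega>. ptype i u = j}. \<theta> (ptype i u))"
  proof (intro sum.group[symmetric])
    show "ptype i ` Aset N \<omega> \<subseteq> {1..N}" using ptype_alive[OF _ assms(2)] by (auto simp: Aset_def)
  qed (use assms in auto)
  also have "\<dots> = (\<Sum>j\<in>{1..N}. \<theta> j * real (Wvec N i j \<omega>))"
    by (intro sum.cong refl) (simp add: Wvec_def Aset_def)
  finally show ?thesis by simp
qed

definition Tlim :: "nat \<Rightarrow> (nat \<Rightarrow> real) \<Rightarrow> nat \<Rightarrow> om \<Rightarrow> real" where
  "Tlim N \<theta> i \<omega> = lim (\<lambda>n. Tn N n \<theta> i \<omega>)"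

lemma Tlim_eq:
  assumes "finite (Aset N \<omega>)"
  shows "(\<lambda>n. Tn N n \<theta> i \<omega>) \<longlonglongrightarrow> (\<Sum>u\<in>Aset N \<omega>. \<theta> (ptype i u))"
    and "Tlim N \<theta> i \<omega> = (\<Sum>u\<in>Aset N \<omega>. \<theta> (ptype i u))"
proof -
  obtain n0 where "\<forall>n\<ge>n0. An N n \<omega> = Aset N \<omega>" using Aset_finite_An[OF assms] by blast
  then have ev: "eventually (\<lambda>n. Tn N n \<theta> i \<omega> = (\<Sum>u\<in>Aset N \<omega>. \<theta> (ptype i u))) sequentially"
    by (auto simp: Tn_sum eventually_sequentially intro!: exI[of _ n0])
  show "(\<lambda>n. Tn N n \<theta> i \<omega>) \<longlonglongrightarrow> (\<Sum>u\<in>Aset N \<omega>. \<theta> (ptype i u))"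
    by (rule tendsto_eventually[OF ev])
  then show "Tlim N \<theta> i \<omega> = (\<Sum>u\<in>Aset N \<omega>. \<theta> (ptype i u))"
    unfolding Tlim_def by (rule limI)
qed

lemma Tlim_rec:
  assumes "finite (Aset N \<omega>)"
  shows "Tlim N \<theta> i \<omega> = \<theta> i + (\<Sum>j\<in>{1..N}. \<Sum>k<\<omega> [] j. Tlim N \<theta> j (shift (j,k) \<omega>))"
proof -
  have disj: "disjoint_family_on (\<lambda>c. Cons c ` Aset N (shift c \<omega>)) (Cset N (\<omega> []))"
    by (auto simp: disjoint_family_on_def)
  have fin: "finite (Aset N (shift c \<omega>))" if "c \<in> Cset N (\<omega> [])" for c
    using finite_Aset_child[OF assms that] .
  have "Tlim N \<theta> i \<omega> = (\<Sum>u\<in>Aset N \<omega>. \<theta> (ptype i u))" by (rule Tlim_eq(2)[OF assms])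
  also have "\<dots> = \<theta> i + (\<Sum>u\<in>(\<Union>c\<in>Cset N (\<omega> []). Cons c ` Aset N (shift c \<omega>)). \<theta> (ptype i u))"
    using fin by (subst Aset_decomp) (subst sum.insert, auto simp: ptype_def)
  also have "(\<Sum>u\<in>(\<Union>c\<in>Cset N (\<omega> []). Cons c ` Aset N (shift c \<omega>)). \<theta> (ptype i u))
     = (\<Sum>c\<in>Cset N (\<omega> []). \<Sum>u\<in>Cons c ` Aset N (shift c \<omega>). \<theta> (ptype i u))"
    using disj fin by (subst sum.UNION_disjoint_family) auto
  also have "\<dots> = (\<Sum>c\<in>Cset N (\<omega> []). \<Sum>u\<in>Aset N (shift c \<omega>). \<theta> (ptype (fst c) u))"
    by (rule sum.cong[OF refl]) (simp add: sum_Cons_image ptype_Cons)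
  also have "\<dots> = (\<Sum>c\<in>Cset N (\<omega> []). Tlim N \<theta> (fst c) (shift c \<omega>))"
    using fin Tlim_eq(2) by (intro sum.cong refl) auto
  finally show ?thesis by (simp add: sum_Cset)
qed


definition Msp :: "om measure" where "Msp = PiM UNIV (\<lambda>_. count_space UNIV)"

lemma sets_GW: "sets (GW N Gam lam i) = sets Msp"
  unfolding GW_def Msp_def by (intro sets_PiM_cong) (auto simp: sets_measure_pmf_count_space)

lemma space_Msp[simp]: "space Msp = UNIV"
  by (simp add: Msp_def space_PiM)

lemma space_GW[simp]: "space (GW N Gam lam i) = UNIV"
  using sets_eq_imp_space_eq[OF sets_GW] by simp

lemma prob_GW: "prob_space (GW N Gam lam i)"
  unfolding GW_def by (intro prob_space_PiM) (simp add: prob_space_measure_pmf)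

lemma meas_coord[measurable]: "(\<lambda>\<omega>. \<omega> u) \<in> measurable Msp (count_space UNIV)"
  unfolding Msp_def by (rule measurable_component_singleton) simp

lemma meas_root[measurable]: "(\<lambda>\<omega>. \<omega> [] j) \<in> measurable Msp (count_space UNIV)"
  using measurable_comp[OF meas_coord[of "[]"] measurable_count_space[of "\<lambda>f::nat\<Rightarrow>nat. f j" UNIV]]
  by (simp add: comp_def)

lemma meas_shift[measurable]: "shift c \<in> measurable Msp Msp"
  unfolding Msp_def shift_def
  by (rule measurable_PiM_single') (auto simp: measurable_component_singleton space_PiM)

lemma meas_Tn[measurable]: "Tn N n \<theta> i \<in> borel_measurable Msp"
proof (induction n arbitrary: i)
  case 0 then show ?case by simp
next
  case (Suc n)
  have "(\<lambda>\<omega>. \<Sum>k<\<omega> [] j. Tn N n \<theta> j (shift (j,k) \<omega>)) \<in> borel_measurable Msp" for j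
  proof (rule measurable_compose_countable'[where f="\<lambda>m \<omega>. \<Sum>k<m. Tn N n \<theta> j (shift (j,k) \<omega>)" and I=UNIV])
    fix m :: nat
    show "(\<lambda>\<omega>. \<Sum>k<m. Tn N n \<theta> j (shift (j,k) \<omega>)) \<in> borel_measurable Msp"
      using Suc by (intro borel_measurable_sum) (rule measurable_compose[OF meas_shift])
  qed auto
  then show ?case by simp
qed

lemma meas_Tlim[measurable]: "Tlim N \<theta> i \<in> borel_measurable Msp"
  unfolding Tlim_def by measurable


definition glue :: "(nat \<Rightarrow> nat) \<times> (nat \<times> nat \<Rightarrow> om) \<Rightarrow> om" where
  "glue p = (\<lambda>u. case u of [] \<Rightarrow> fst p | c#u' \<Rightarrow> snd p c u')"

definition Sub :: "nat \<Rightarrow> (nat \<Rightarrow> real) \<Rightarrow> (nat \<Rightarrow> (nat \<times> real) set pmf) \<Rightarrow> (nat \<times> nat \<Rightarrow> om) measure" where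
  "Sub N Gam lam = PiM UNIV (\<lambda>c. GW N Gam lam (fst c))"

lemma sets_Sub: "sets (Sub N Gam lam) = sets (PiM UNIV (\<lambda>_::nat\<times>nat. Msp))"
  unfolding Sub_def by (intro sets_PiM_cong) (auto simp: sets_GW)

lemma space_Sub[simp]: "space (Sub N Gam lam) = UNIV"
  by (simp add: Sub_def space_PiM)

lemma prob_Sub: "prob_space (Sub N Gam lam)"
  unfolding Sub_def by (intro prob_space_PiM prob_GW)

lemma meas_glue0: "glue \<in> measurable (count_space UNIV \<Otimes>\<^sub>M PiM UNIV (\<lambda>_::nat\<times>nat. Msp)) Msp"
proof -
  have "(\<lambda>p. glue p u) \<in> measurable (count_space UNIV \<Otimes>\<^sub>M PiM UNIV (\<lambda>_::nat\<times>nat. Msp)) (count_space UNIV)" for u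
  proof (cases u)
    case Nil then show ?thesis by (simp add: glue_def)
  next
    case (Cons c u')
    have "(\<lambda>p. snd p c) \<in> measurable (count_space UNIV \<Otimes>\<^sub>M PiM UNIV (\<lambda>_::nat\<times>nat. Msp)) Msp"
      by (rule measurable_compose[OF measurable_snd measurable_component_singleton]) simp
    then have "(\<lambda>p. snd p c u') \<in> measurable (count_space UNIV \<Otimes>\<^sub>M PiM UNIV (\<lambda>_::nat\<times>nat. Msp)) (count_space UNIV)"
      by (rule measurable_compose[OF _ meas_coord])
    then show ?thesis using Cons by (simp add: glue_def)
  qed
  then show ?thesis unfolding Msp_def
    by (intro measurable_PiM_single') (auto simp: space_PiM)
qed

lemma meas_glue[measurable]: "glue \<in> measurable (measure_pmf p \<Otimes>\<^sub>M Sub N Gam lam) Msp"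
  using meas_glue0 by (subst measurable_cong_sets[OF sets_pair_measure_cong[OF sets_measure_pmf_count_space sets_Sub] refl])

lemma prod_emb_UNIV:
  assumes "\<And>k. space (M k) = UNIV"
  shows "prod_emb UNIV M J (Pi\<^sub>E J A) = {\<omega>. \<forall>u\<in>J. \<omega> u \<in> A u}"
  using assms by (auto simp: prod_emb_def space_PiM restrict_PiE_iff)

lemma prod_split:
  fixes h :: "(nat \<times> nat) list \<Rightarrow> 'a::comm_monoid_mult"
  assumes "finite J"
  shows "(\<Prod>u\<in>J. h u) = (if [] \<in> J then h [] else 1) *
     (\<Prod>c\<in>hd ` (J - {[]}). \<Prod>u'\<in>{u'. c#u' \<in> J}. h (c#u'))"
proof -
  have finJc: "finite {u'. c#u' \<in> J}" for c
    using finite_vimageI[OF assms, of "Cons c"] by (simp add: vimage_def)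
  have bij: "bij_betw (\<lambda>(c,u'). c#u') (Sigma (hd ` (J - {[]})) (\<lambda>c. {u'. c#u' \<in> J})) (J - {[]})"
  proof (rule bij_betw_imageI)
    show "inj_on (\<lambda>(c,u'). c#u') (Sigma (hd ` (J - {[]})) (\<lambda>c. {u'. c#u' \<in> J}))"
      by (auto simp: inj_on_def)
    show "(\<lambda>(c,u'). c#u') ` (Sigma (hd ` (J - {[]})) (\<lambda>c. {u'. c#u' \<in> J})) = J - {[]}"
    proof (rule set_eqI, rule iffI)
      fix u assume "u \<in> J - {[]}"
      then show "u \<in> (\<lambda>(c,u'). c#u') ` (Sigma (hd ` (J - {[]})) (\<lambda>c. {u'. c#u' \<in> J}))"
        by (cases u) (auto intro!: image_eqI[of _ _ "(hd u, tl u)"])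
    qed auto
  qed
  have "(\<Prod>c\<in>hd ` (J - {[]}). \<Prod>u'\<in>{u'. c#u' \<in> J}. h (c#u')) =
      (\<Prod>p\<in>Sigma (hd ` (J - {[]})) (\<lambda>c. {u'. c#u' \<in> J}). h ((\<lambda>(c,u'). c#u') p))"
    using assms finJc by (subst prod.Sigma) (auto simp: split_beta)
  also have "\<dots> = (\<Prod>u\<in>J - {[]}. h u)"
    by (rule prod.reindex_bij_betw[OF bij])
  finally have *: "(\<Prod>c\<in>hd ` (J - {[]}). \<Prod>u'\<in>{u'. c#u' \<in> J}. h (c#u')) = (\<Prod>u\<in>J - {[]}. h u)" .
  show ?thesis
  proof (cases "[] \<in> J")
    case True then show ?thesis using assms * by (simp add: prod.remove)
  next
    case False then show ?thesis using * by simp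
  qed
qed


lemma GW_decomp:
  "distr (measure_pmf (offspring N Gam lam i) \<Otimes>\<^sub>M Sub N Gam lam) (GW N Gam lam i) glue = GW N Gam lam i"
  (is "distr ?P ?G glue = ?G")
proof -
  let ?M = "\<lambda>u. measure_pmf (offspring N Gam lam (ptype i u))"
  interpret S: prob_space "Sub N Gam lam" by (rule prob_Sub)
  interpret G: prob_space ?G by (rule prob_GW)
  have mg: "glue \<in> measurable ?P ?G"
    using meas_glue by (subst measurable_cong_sets[OF refl sets_GW])
  have "?G = distr ?P ?G glue"
  proof (rule measure_eqI_PiM_infinite[where I=UNIV and M="?M"])
    show "sets ?G = sets (PiM UNIV ?M)" by (simp add: GW_def)
    show "sets (distr ?P ?G glue) = sets (PiM UNIV ?M)" by (simp add: GW_def)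
    show "finite_measure ?G" by (rule G.finite_measure_axioms)
  next
    fix A J assume J: "finite J" "J \<subseteq> (UNIV :: (nat \<times> nat) list set)"
      and A: "\<And>u. u \<in> J \<Longrightarrow> A u \<in> sets (?M u)"
    define A0 where "A0 = (if [] \<in> J then A [] else UNIV)"
    define CJ where "CJ = hd ` (J - {[]})"
    define Jc where "Jc c = {u'. c#u' \<in> J}" for c
    define B where "B c = prod_emb UNIV (\<lambda>u'. measure_pmf (offspring N Gam lam (ptype (fst c) u'))) (Jc c) (Pi\<^sub>E (Jc c) (\<lambda>u'. A (c#u')))" for c
    define Y where "Y = prod_emb UNIV (\<lambda>c. GW N Gam lam (fst c)) CJ (Pi\<^sub>E CJ B)"
    have finCJ: "finite CJ" using J by (simp add: CJ_def)
    have finJc: "finite (Jc c)" for c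
      using finite_vimageI[OF J(1), of "Cons c"] by (simp add: Jc_def vimage_def)
    have B_eq: "B c = {\<omega>. \<forall>u'\<in>Jc c. \<omega> u' \<in> A (c#u')}" for c
      unfolding B_def by (rule prod_emb_UNIV) simp
    have Y_eq: "Y = {ws. \<forall>c\<in>CJ. ws c \<in> B c}"
      unfolding Y_def by (rule prod_emb_UNIV) simp
    have X_eq: "prod_emb UNIV ?M J (Pi\<^sub>E J A) = {\<omega>. \<forall>u\<in>J. \<omega> u \<in> A u}"
      by (rule prod_emb_UNIV) simp
    have Xsets: "prod_emb UNIV ?M J (Pi\<^sub>E J A) \<in> sets ?G"
      unfolding GW_def using J A by (intro sets_PiM_I) auto
    have pre: "glue -` prod_emb UNIV ?M J (Pi\<^sub>E J A) \<inter> space ?P = A0 \<times> Y"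
    proof (rule set_eqI)
      fix p :: "(nat \<Rightarrow> nat) \<times> (nat \<times> nat \<Rightarrow> om)"
      obtain x ws where p: "p = (x, ws)" by (cases p)
      have "(\<forall>u\<in>J. glue (x, ws) u \<in> A u) \<longleftrightarrow> x \<in> A0 \<and> (\<forall>c\<in>CJ. \<forall>u'\<in>Jc c. ws c u' \<in> A (c#u'))"
      proof
        assume H: "\<forall>u\<in>J. glue (x, ws) u \<in> A u"
        have "x \<in> A0" using H by (auto simp: A0_def glue_def)
        moreover have "\<forall>c\<in>CJ. \<forall>u'\<in>Jc c. ws c u' \<in> A (c#u')"
          using H by (auto simp: Jc_def glue_def)
        ultimately show "x \<in> A0 \<and> (\<forall>c\<in>CJ. \<forall>u'\<in>Jc c. ws c u' \<in> A (c#u'))" by blast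
      next
        assume H: "x \<in> A0 \<and> (\<forall>c\<in>CJ. \<forall>u'\<in>Jc c. ws c u' \<in> A (c#u'))"
        show "\<forall>u\<in>J. glue (x, ws) u \<in> A u"
        proof
          fix u assume u: "u \<in> J"
          show "glue (x, ws) u \<in> A u"
          proof (cases u)
            case Nil then show ?thesis using H u by (simp add: A0_def glue_def)
          next
            case (Cons c u')
            then have "c \<in> CJ" "u' \<in> Jc c" using u by (auto simp: CJ_def Jc_def intro!: image_eqI[of _ _ u])
            then show ?thesis using H Cons by (simp add: glue_def)
          qed
        qed
      qed
      then show "p \<in> glue -` prod_emb UNIV ?M J (Pi\<^sub>E J A) \<inter> space ?P \<longleftrightarrow> p \<in> A0 \<times> Y"
        unfolding X_eq Y_eq B_eq p by (simp add: space_pair_measure)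
    qed
    have Ysets: "Y \<in> sets (Sub N Gam lam)"
      unfolding Y_def Sub_def
    proof (intro sets_PiM_I ballI)
      fix c assume "c \<in> CJ"
      show "B c \<in> sets (GW N Gam lam (fst c))"
        unfolding B_def GW_def using finJc by (intro sets_PiM_I) auto
    qed (use finCJ in auto)
    have "emeasure (distr ?P ?G glue) (prod_emb UNIV ?M J (Pi\<^sub>E J A)) = emeasure ?P (A0 \<times> Y)"
      using mg Xsets by (simp add: emeasure_distr pre)
    also have "\<dots> = emeasure (measure_pmf (offspring N Gam lam i)) A0 * emeasure (Sub N Gam lam) Y"
      using Ysets by (intro S.emeasure_pair_measure_Times) auto
    also have "emeasure (Sub N Gam lam) Y = (\<Prod>c\<in>CJ. emeasure (GW N Gam lam (fst c)) (B c))"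
      unfolding Y_def Sub_def
    proof (rule emeasure_PiM_emb)
      fix c assume "c \<in> CJ"
      show "B c \<in> sets (GW N Gam lam (fst c))"
        unfolding B_def GW_def using finJc by (intro sets_PiM_I) auto
    qed (use finCJ prob_GW in auto)
    also have "\<dots> = (\<Prod>c\<in>CJ. \<Prod>u'\<in>Jc c. emeasure (?M (c#u')) (A (c#u')))"
      unfolding B_def GW_def ptype_Cons using finJc
      by (intro prod.cong refl emeasure_PiM_emb) (auto simp: prob_space_measure_pmf)
    also have "emeasure (measure_pmf (offspring N Gam lam i)) A0 = (if [] \<in> J then emeasure (?M []) (A []) else 1)"
      by (simp add: A0_def ptype_def measure_pmf.emeasure_space_1[simplified])
    also have "(if [] \<in> J then emeasure (?M []) (A []) else 1) * (\<Prod>c\<in>CJ. \<Prod>u'\<in>Jc c. emeasure (?M (c#u')) (A (c#u')))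
       = (\<Prod>u\<in>J. emeasure (?M u) (A u))"
      unfolding CJ_def Jc_def by (rule prod_split[symmetric, OF J(1)])
    also have "\<dots> = emeasure ?G (prod_emb UNIV ?M J (Pi\<^sub>E J A))"
      unfolding GW_def using J A by (intro emeasure_PiM_emb[symmetric]) (auto simp: prob_space_measure_pmf)
    finally show "emeasure ?G (prod_emb UNIV ?M J (Pi\<^sub>E J A)) = emeasure (distr ?P ?G glue) (prod_emb UNIV ?M J (Pi\<^sub>E J A))" by simp
  qed
  then show ?thesis by simp
qed


lemma prod_int:
  fixes M :: "'i \<Rightarrow> 'a measure" and G :: "'i \<Rightarrow> 'a \<Rightarrow> ennreal"
  assumes P: "\<And>c. prob_space (M c)" and C: "finite C"
    and G: "\<And>c. G c \<in> borel_measurable (M c)"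
  shows "(\<integral>\<^sup>+ws. (\<Prod>c\<in>C. G c (ws c)) \<partial>PiM UNIV M) = (\<Prod>c\<in>C. \<integral>\<^sup>+z. G c z \<partial>M c)"
proof -
  interpret product_prob_space M UNIV
    using P by (simp add: product_prob_space_def product_prob_space_axioms_def product_sigma_finite_def prob_space_imp_sigma_finite)
  have mr: "(\<lambda>x. restrict x C) \<in> measurable (PiM UNIV M) (PiM C M)"
    by (rule measurable_restrict_subset) simp
  have mG: "(\<lambda>z. \<Prod>c\<in>C. G c (z c)) \<in> borel_measurable (PiM C M)"
  proof (intro borel_measurable_prod_ennreal)
    fix c assume c: "c \<in> C"
    show "(\<lambda>z. G c (z c)) \<in> borel_measurable (PiM C M)"
      using measurable_component_singleton[OF c, of M] G[of c] by (rule measurable_compose)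
  qed
  have "(\<integral>\<^sup>+ws. (\<Prod>c\<in>C. G c (ws c)) \<partial>PiM UNIV M) = (\<integral>\<^sup>+ws. (\<Prod>c\<in>C. G c (restrict ws C c)) \<partial>PiM UNIV M)"
    by (intro nn_integral_cong prod.cong refl) simp
  also have "\<dots> = (\<integral>\<^sup>+z. (\<Prod>c\<in>C. G c (z c)) \<partial>distr (PiM UNIV M) (PiM C M) (\<lambda>x. restrict x C))"
    using mr mG by (subst nn_integral_distr) auto
  also have "\<dots> = (\<integral>\<^sup>+z. (\<Prod>c\<in>C. G c (z c)) \<partial>PiM C M)"
    using C by (subst distr_PiM_restrict_finite) auto
  also have "\<dots> = (\<Prod>c\<in>C. \<integral>\<^sup>+z. G c z \<partial>M c)"
    using C G by (rule product_nn_integral_prod)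
  finally show ?thesis .
qed

lemma meas_prodg:
  fixes g :: "nat \<Rightarrow> om \<Rightarrow> ennreal"
  assumes g: "\<And>j. g j \<in> borel_measurable Msp"
  shows "(\<lambda>\<omega>. \<Prod>j\<in>{1..N}. \<Prod>k<\<omega> [] j. g j (shift (j,k) \<omega>)) \<in> borel_measurable Msp"
proof (rule borel_measurable_prod_ennreal)
  fix j
  show "(\<lambda>\<omega>. \<Prod>k<\<omega> [] j. g j (shift (j,k) \<omega>)) \<in> borel_measurable Msp"
  proof (rule measurable_compose_countable'[where f="\<lambda>m \<omega>. \<Prod>k<m. g j (shift (j,k) \<omega>)" and I=UNIV])
    fix m :: nat
    show "(\<lambda>\<omega>. \<Prod>k<m. g j (shift (j,k) \<omega>)) \<in> borel_measurable Msp"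
      using g by (intro borel_measurable_prod_ennreal) (rule measurable_compose[OF meas_shift])
  qed auto
qed

lemma branching:
  fixes g :: "nat \<Rightarrow> om \<Rightarrow> ennreal"
  assumes g: "\<And>j. g j \<in> borel_measurable Msp"
  shows "(\<integral>\<^sup>+\<omega>. (\<Prod>j\<in>{1..N}. \<Prod>k<\<omega> [] j. g j (shift (j,k) \<omega>)) \<partial>GW N Gam lam i)
    = (\<integral>\<^sup>+x. (\<Prod>j\<in>{1..N}. (\<integral>\<^sup>+\<omega>. g j \<omega> \<partial>GW N Gam lam j) ^ x j) \<partial>measure_pmf (offspring N Gam lam i))"
proof -
  let ?f = "\<lambda>\<omega>. \<Prod>j\<in>{1..N}. \<Prod>k<\<omega> [] j. g j (shift (j,k) \<omega>)"
  let ?O = "measure_pmf (offspring N Gam lam i)"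
  interpret S: prob_space "Sub N Gam lam" by (rule prob_Sub)
  have mf: "?f \<in> borel_measurable Msp" by (rule meas_prodg[OF g])
  have mfG: "?f \<in> borel_measurable (GW N Gam lam i)"
    using mf by (subst measurable_cong_sets[OF sets_GW refl])
  have mg: "glue \<in> measurable (?O \<Otimes>\<^sub>M Sub N Gam lam) (GW N Gam lam i)"
    using meas_glue by (subst measurable_cong_sets[OF refl sets_GW])
  have mfg: "(\<lambda>p. ?f (glue p)) \<in> borel_measurable (?O \<Otimes>\<^sub>M Sub N Gam lam)"
    by (rule measurable_compose[OF meas_glue mf])
  have "(\<integral>\<^sup>+\<omega>. ?f \<omega> \<partial>GW N Gam lam i) = (\<integral>\<^sup>+\<omega>. ?f \<omega> \<partial>distr (?O \<Otimes>\<^sub>M Sub N Gam lam) (GW N Gam lam i) glue)"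
    by (simp add: GW_decomp)
  also have "\<dots> = (\<integral>\<^sup>+p. ?f (glue p) \<partial>(?O \<Otimes>\<^sub>M Sub N Gam lam))"
    by (rule nn_integral_distr[OF mg]) (use mfG in simp)
  also have "\<dots> = (\<integral>\<^sup>+x. \<integral>\<^sup>+ws. ?f (glue (x, ws)) \<partial>Sub N Gam lam \<partial>?O)"
    by (rule S.nn_integral_fst[symmetric, OF mfg])
  also have "\<dots> = (\<integral>\<^sup>+x. (\<Prod>j\<in>{1..N}. (\<integral>\<^sup>+\<omega>. g j \<omega> \<partial>GW N Gam lam j) ^ x j) \<partial>?O)"
  proof (rule nn_integral_cong)
    fix x :: "nat \<Rightarrow> nat"
    have eq: "?f (glue (x, ws)) = (\<Prod>c\<in>Cset N x. g (fst c) (ws c))" for ws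
    proof -
      have "shift c (glue (x, ws)) = ws c" for c by (simp add: shift_def glue_def)
      moreover have "glue (x, ws) [] = x" by (simp add: glue_def)
      ultimately show ?thesis by (simp add: prod_Cset)
    qed
    have "(\<integral>\<^sup>+ws. ?f (glue (x, ws)) \<partial>Sub N Gam lam) = (\<integral>\<^sup>+ws. (\<Prod>c\<in>Cset N x. g (fst c) (ws c)) \<partial>Sub N Gam lam)"
      by (rule nn_integral_cong) (rule eq)
    also have "\<dots> = (\<Prod>c\<in>Cset N x. \<integral>\<^sup>+\<omega>. g (fst c) \<omega> \<partial>GW N Gam lam (fst c))"
      unfolding Sub_def
    proof (rule prod_int)
      fix c :: "nat \<times> nat"
      show "g (fst c) \<in> borel_measurable (GW N Gam lam (fst c))"
        using g by (subst measurable_cong_sets[OF sets_GW refl])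
    qed (auto intro: prob_GW)
    also have "\<dots> = (\<Prod>j\<in>{1..N}. (\<integral>\<^sup>+\<omega>. g j \<omega> \<partial>GW N Gam lam j) ^ x j)"
      by (simp add: prod_Cset)
    finally show "(\<integral>\<^sup>+ws. ?f (glue (x, ws)) \<partial>Sub N Gam lam) = (\<Prod>j\<in>{1..N}. (\<integral>\<^sup>+\<omega>. g j \<omega> \<partial>GW N Gam lam j) ^ x j)" .
  qed
  finally show ?thesis .
qed


lemma pmf_meas[measurable]: "(f :: 'a \<Rightarrow> 'b::topological_space) \<in> borel_measurable (measure_pmf p)"
  by (simp add: measurable_cong_sets[OF sets_measure_pmf_count_space refl])

lemma poisson_mean_sums:
  fixes a :: real
  shows "(\<lambda>n. a ^ n / fact n * exp (- a) * real n) sums a"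
proof -
  have e: "(\<lambda>n. a ^ n / fact n) sums exp a"
    using exp_converges[of a] by (simp add: divide_inverse mult.commute scaleR_conv_of_real)
  have "(\<lambda>m. a * (a ^ m / fact m) * exp (- a)) sums (a * exp a * exp (- a))"
    by (intro sums_mult2 sums_mult e)
  moreover have "(\<lambda>m. a ^ Suc m / fact (Suc m) * exp (- a) * real (Suc m)) = (\<lambda>m. a * (a ^ m / fact m) * exp (- a))"
  proof (rule ext)
    fix m
    have g: "x \<noteq> 0 \<Longrightarrow> F \<noteq> 0 \<Longrightarrow> a * b / (x * F) * e * x = a * (b / F) * e" for x F b e :: real
      by (simp add: field_simps)
    have "a ^ Suc m / fact (Suc m) * exp (- a) * real (Suc m) = a * a ^ m / (real (Suc m) * fact m) * exp (- a) * real (Suc m)"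
      by (simp only: power_Suc fact_Suc of_nat_mult)
    also have "\<dots> = a * (a ^ m / fact m) * exp (- a)"
      by (rule g) auto
    finally show "a ^ Suc m / fact (Suc m) * exp (- a) * real (Suc m) = a * (a ^ m / fact m) * exp (- a)" .
  qed
  ultimately have "(\<lambda>m. a ^ Suc m / fact (Suc m) * exp (- a) * real (Suc m)) sums a"
    by (simp add: mult.assoc flip: exp_add)
  then show ?thesis using sums_Suc_iff[where f="\<lambda>n. a ^ n / fact n * exp (- a) * real n" and s=a] by simp
qed

lemma pois_mean:
  assumes "0 \<le> a"
  shows "(\<integral>\<^sup>+n. ennreal (real n) \<partial>measure_pmf (pois a)) = ennreal a"
proof (cases "a = 0")
  case True then show ?thesis by (simp add: pois_def)
next
  case False
  then have a: "0 < a" using assms by simp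
  have "(\<integral>\<^sup>+n. ennreal (real n) \<partial>measure_pmf (pois a)) = (\<Sum>n. ennreal (a ^ n / fact n * exp (- a) * real n))"
    using a by (simp add: pois_def nn_integral_measure_pmf nn_integral_count_space_nat ennreal_mult'' flip: ennreal_mult)
  also have "\<dots> = ennreal a"
    using poisson_mean_sums[of a] a by (intro sums_unique[symmetric]) (simp add: sums_ennreal)
  finally show ?thesis .
qed

lemma offspring_mean:
  assumes Gam: "\<forall>j\<in>{1..N}. Gam j > 0"
  shows "(\<integral>\<^sup>+x. ennreal (\<Sum>j\<in>{1..N}. real (x j)) \<partial>measure_pmf (offspring N Gam lam i))
     = (\<integral>\<^sup>+v. ennreal (Pv N Gam v) \<partial>measure_pmf (lam i))"
proof -
  have nn: "0 \<le> Gam j * measure lborel (psec j v)" if "j \<in> {1..N}" for j v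
    using Gam that by (simp add: less_imp_le)
  show ?thesis
    unfolding offspring_def nn_integral_bind_pmf
  proof (rule nn_integral_cong)
    fix v
    let ?P = "Pi_pmf {1..N} 0 (\<lambda>j. pois (Gam j * measure lborel (psec j v)))"
    have "(\<integral>\<^sup>+x. ennreal (\<Sum>j\<in>{1..N}. real (x j)) \<partial>measure_pmf ?P) = (\<integral>\<^sup>+x. (\<Sum>j\<in>{1..N}. ennreal (real (x j))) \<partial>measure_pmf ?P)"
      by (simp)
    also have "\<dots> = (\<Sum>j\<in>{1..N}. \<integral>\<^sup>+x. ennreal (real (x j)) \<partial>measure_pmf ?P)"
      by (rule nn_integral_sum) simp
    also have "\<dots> = (\<Sum>j\<in>{1..N}. \<integral>\<^sup>+n. ennreal (real n) \<partial>measure_pmf (map_pmf (\<lambda>x. x j) ?P))"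
      by simp
    also have "\<dots> = (\<Sum>j\<in>{1..N}. ennreal (Gam j * measure lborel (psec j v)))"
      by (intro sum.cong refl) (simp add: Pi_pmf_component pois_mean nn)
    also have "\<dots> = ennreal (Pv N Gam v)"
      unfolding Pv_def by (rule sum_ennreal) (rule nn)
    finally show "(\<integral>\<^sup>+x. ennreal (\<Sum>j\<in>{1..N}. real (x j)) \<partial>measure_pmf ?P) = ennreal (Pv N Gam v)" .
  qed
qed

lemma exp_quad:
  fixes y t :: real
  assumes y: "0 \<le> y" and t: "0 \<le> t" "t \<le> 1"
  shows "exp (t * y) \<le> 1 + t * y + t\<^sup>2 * exp y"
proof -
  let ?f = "\<lambda>x n. inverse (fact (n + 2)) * (x ^ (n + 2)) :: real"
  have s: "summable (?f x)" for x
    using summable_ignore_initial_segment[OF summable_exp[of x], of 2] by simp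
  have e1: "exp (t * y) = 1 + t * y + (\<Sum>n. ?f (t * y) n)"
    using exp_first_two_terms[of "t * y"] by simp
  have e2: "exp y = 1 + y + (\<Sum>n. ?f y n)"
    using exp_first_two_terms[of y] by simp
  have "(\<Sum>n. ?f (t * y) n) \<le> (\<Sum>n. t\<^sup>2 * ?f y n)"
  proof (rule suminf_le)
    fix n
    have tn: "t ^ n \<le> 1" using t by (rule power_le_one)
    have "t ^ (n + 2) = t\<^sup>2 * t ^ n" by (simp only: power_add mult.commute)
    also have "\<dots> \<le> t\<^sup>2" using mult_left_le[OF tn, of "t\<^sup>2"] by simp
    finally have "t ^ (n + 2) \<le> t\<^sup>2" .
    then have "t ^ (n + 2) * y ^ (n + 2) \<le> t\<^sup>2 * y ^ (n + 2)"
      using y by (intro mult_right_mono) auto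
    then have le: "t ^ (n + 2) * y ^ (n + 2) \<le> t\<^sup>2 * y ^ (n + 2)" .
    have c: "0 \<le> inverse (fact (n+2) :: real)" by simp
    have "?f (t * y) n = (t ^ (n + 2) * y ^ (n + 2)) * inverse (fact (n+2))"
      by (simp only: power_mult_distrib mult.commute)
    also have "\<dots> \<le> (t\<^sup>2 * y ^ (n + 2)) * inverse (fact (n+2))"
      by (rule mult_right_mono[OF le c])
    also have "\<dots> = t\<^sup>2 * ?f y n" by (simp only: mult_ac)
    finally show "?f (t * y) n \<le> t\<^sup>2 * ?f y n" .
  qed (use s summable_mult in auto)
  also have "\<dots> = t\<^sup>2 * (\<Sum>n. ?f y n)"
    using s[of y] by (simp add: suminf_mult suminf_mult2)
  also have "\<dots> \<le> t\<^sup>2 * exp y"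
  proof -
    have "(\<Sum>n. ?f y n) \<le> exp y" using e2 y by simp
    then show ?thesis by (intro mult_left_mono) auto
  qed
  finally show ?thesis using e1 by simp
qed


lemma prod_exp_pow:
  "(\<Prod>j\<in>A. ennreal (exp (y j)) ^ x j) = ennreal (exp (\<Sum>j\<in>A. y j * real (x j)))"
proof -
  have "(\<Prod>j\<in>A. ennreal (exp (y j)) ^ x j) = (\<Prod>j\<in>A. ennreal (exp (y j * real (x j))))"
    by (intro prod.cong refl) (simp add: ennreal_power exp_of_nat_mult[symmetric] mult.commute)
  also have "\<dots> = ennreal (\<Prod>j\<in>A. exp (y j * real (x j)))"
    by (rule prod_ennreal) simp
  also have "\<dots> = ennreal (exp (\<Sum>j\<in>A. y j * real (x j)))"
    by (cases "finite A") (simp_all add: exp_sum)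
  finally show ?thesis .
qed

lemma mgfX_const:
  "mgfX N Gam lam i (\<lambda>_. b) = (\<integral>\<^sup>+x. ennreal (exp (b * (\<Sum>j\<in>{1..N}. real (x j)))) \<partial>measure_pmf (offspring N Gam lam i))"
  unfolding mgfX_def by (simp add: sum_distrib_left)

lemma small_b_one:
  fixes m K bb :: real
  assumes m: "(\<integral>\<^sup>+x. ennreal (Z x) \<partial>measure_pmf p) = ennreal m" "m < 1"
    and K: "(\<integral>\<^sup>+x. ennreal (exp (bb * Z x)) \<partial>measure_pmf p) = ennreal K"
    and Z: "\<And>x. 0 \<le> Z x" and bb: "0 < bb" and m0: "0 \<le> m" and K0: "0 \<le> K"
  shows "\<exists>\<epsilon>>0. \<forall>b. 0 < b \<and> b < \<epsilon> \<longrightarrow> (\<integral>\<^sup>+x. ennreal (exp (b * Z x)) \<partial>measure_pmf p) < ennreal (exp b)"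
proof -
  define \<epsilon> where "\<epsilon> = min bb ((1 - m) * bb\<^sup>2 / (K + 1))"
  have "\<epsilon> > 0" using bb m K0 by (simp add: \<epsilon>_def)
  moreover have "(\<integral>\<^sup>+x. ennreal (exp (b * Z x)) \<partial>measure_pmf p) < ennreal (exp b)" if b: "0 < b" "b < \<epsilon>" for b
  proof -
    define t where "t = b / bb"
    have t: "0 \<le> t" "t \<le> 1" using b bb by (auto simp: t_def \<epsilon>_def)
    have pw: "exp (b * Z x) \<le> 1 + b * Z x + t\<^sup>2 * exp (bb * Z x)" for x
      using exp_quad[of "bb * Z x" t] t Z[of x] bb by (simp add: t_def mult.assoc)
    have "(\<integral>\<^sup>+x. ennreal (exp (b * Z x)) \<partial>measure_pmf p) \<le> (\<integral>\<^sup>+x. ennreal (1 + b * Z x + t\<^sup>2 * exp (bb * Z x)) \<partial>measure_pmf p)"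
      by (intro nn_integral_mono ennreal_leI pw)
    also have "\<dots> = (\<integral>\<^sup>+x. 1 + ennreal b * ennreal (Z x) + ennreal (t\<^sup>2) * ennreal (exp (bb * Z x)) \<partial>measure_pmf p)"
      using b Z by (intro nn_integral_cong) (simp add: ennreal_plus ennreal_mult)
    also have "\<dots> = 1 + ennreal b * ennreal m + ennreal (t\<^sup>2) * ennreal K"
      by (simp add: nn_integral_add nn_integral_cmult m(1) K measure_pmf.emeasure_space_1)
    also have "\<dots> = ennreal (1 + b * m + t\<^sup>2 * K)"
      using b m0 K0 by (simp add: ennreal_plus ennreal_mult)
    also have "\<dots> < ennreal (exp b)"
    proof (rule ennreal_lessI)
      have "b * K / bb\<^sup>2 \<le> b * (K + 1) / bb\<^sup>2"
        using b bb by (intro divide_right_mono mult_left_mono) auto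
      also have "\<dots> < 1 - m"
      proof -
        have "b < (1 - m) * bb\<^sup>2 / (K + 1)" using b by (simp add: \<epsilon>_def)
        then have "b * (K + 1) < (1 - m) * bb\<^sup>2" using K0 by (simp add: field_simps)
        then show ?thesis using bb by (simp add: field_simps)
      qed
      finally have "b * K / bb\<^sup>2 < 1 - m" .
      then have "b * (b * K / bb\<^sup>2) < b * (1 - m)" using b by (intro mult_strict_left_mono) auto
      moreover have "t\<^sup>2 * K = b * (b * K / bb\<^sup>2)" by (simp add: t_def power2_eq_square field_simps)
      ultimately have "1 + b * m + t\<^sup>2 * K < 1 + b" by (simp add: algebra_simps)
      also have "\<dots> \<le> exp b" by (rule exp_ge_add_one_self)
      finally show "1 + b * m + t\<^sup>2 * K < exp b" .
    qed simp
    finally show ?thesis .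
  qed
  ultimately show ?thesis by blast
qed


lemma eventually_from_eps:
  assumes "\<exists>\<epsilon>>0. \<forall>b. 0 < b \<and> b < \<epsilon> \<longrightarrow> P b"
  shows "eventually P (at_right (0::real))"
  using assms unfolding eventually_at_right_field by auto

lemma exists_from_eventually:
  assumes "eventually P (at_right (0::real))"
  shows "\<exists>b>0. P b"
proof -
  obtain e where e: "e > 0" "\<forall>y>0. y < e \<longrightarrow> P y" using assms unfolding eventually_at_right_field by auto
  then show ?thesis by (intro exI[of _ "e/2"]) auto
qed

lemma choose_b:
  assumes Gam_pos: "\<forall>j\<in>{1..N}. Gam j > 0"
    and subcrit: "\<forall>i\<in>{1..N}. (\<integral>\<^sup>+ v. ennreal (Pv N Gam v) \<partial>measure_pmf (lam i)) < 1"
    and R_pos: "R > 0"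
    and expmom: "\<forall>\<theta>. (\<forall>j\<in>{1..N}. 0 < \<theta> j \<and> \<theta> j < R) \<longrightarrow>
        (\<forall>i\<in>{1..N}. mgfX N Gam lam i \<theta> < \<infinity>)"
  shows "\<exists>b. 0 < b \<and> b < R \<and> (\<forall>i\<in>{1..N}. mgfX N Gam lam i (\<lambda>_. b) < ennreal (exp b))"
proof -
  define b0 where "b0 = R / 2"
  have b0: "0 < b0" "b0 < R" using R_pos by (auto simp: b0_def)
  have ev: "eventually (\<lambda>b. mgfX N Gam lam i (\<lambda>_. b) < ennreal (exp b)) (at_right 0)" if i: "i \<in> {1..N}" for i
  proof (rule eventually_from_eps)
    let ?p = "offspring N Gam lam i"
    let ?Z = "\<lambda>x. \<Sum>j\<in>{1..N}. real (x j)"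
    define mm where "mm = (\<integral>\<^sup>+x. ennreal (?Z x) \<partial>measure_pmf ?p)"
    define KK where "KK = (\<integral>\<^sup>+x. ennreal (exp (b0 * ?Z x)) \<partial>measure_pmf ?p)"
    have mm1: "mm < 1" using subcrit offspring_mean[OF Gam_pos, of lam i] i by (simp add: mm_def)
    have "mgfX N Gam lam i (\<lambda>_. b0) < \<infinity>"
      using expmom[rule_format, of "\<lambda>_. b0" i] b0 i by simp
    then have KKf: "KK < \<infinity>"
      unfolding KK_def mgfX_const .
    have one: "(1::ennreal) < \<infinity>" by simp
    have mmf: "mm < \<infinity>" using less_trans[OF mm1 one] .
    have "ennreal (enn2real mm) < ennreal 1"
      using mm1 mmf by simp
    then have "enn2real mm < 1"
      by (simp add: ennreal_less_iff)
    have "\<exists>\<epsilon>>0. \<forall>b. 0 < b \<and> b < \<epsilon> \<longrightarrow> (\<integral>\<^sup>+x. ennreal (exp (b * ?Z x)) \<partial>measure_pmf ?p) < ennreal (exp b)"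
    proof (rule small_b_one[where Z="?Z" and p="?p" and m="enn2real mm" and bb=b0 and K="enn2real KK"])
      show "(\<integral>\<^sup>+x. ennreal (?Z x) \<partial>measure_pmf ?p) = ennreal (enn2real mm)"
        using mmf by (simp add: mm_def)
      show "(\<integral>\<^sup>+x. ennreal (exp (b0 * ?Z x)) \<partial>measure_pmf ?p) = ennreal (enn2real KK)"
        using KKf by (simp add: KK_def)
      show "\<And>x. 0 \<le> ?Z x" by (rule sum_nonneg) simp
    qed (use b0 \<open>enn2real mm < 1\<close> in simp_all)
    then show "\<exists>\<epsilon>>0. \<forall>b. 0 < b \<and> b < \<epsilon> \<longrightarrow> mgfX N Gam lam i (\<lambda>_. b) < ennreal (exp b)"
      by (simp only: mgfX_const)
  qed
  have "eventually (\<lambda>b. b < R \<and> (\<forall>i\<in>{1..N}. mgfX N Gam lam i (\<lambda>_. b) < ennreal (exp b))) (at_right 0)"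
  proof (intro eventually_conj)
    show "eventually (\<lambda>b. b < R) (at_right 0)"
      using R_pos by (intro eventually_from_eps) auto
    show "eventually (\<lambda>b. \<forall>i\<in>{1..N}. mgfX N Gam lam i (\<lambda>_. b) < ennreal (exp b)) (at_right 0)"
      using ev by (intro eventually_ball_finite) auto
  qed
  then show ?thesis using exists_from_eventually by blast
qed

lemma choose_r:
  assumes b: "\<forall>i\<in>{1..N}. mgfX N Gam lam i (\<lambda>_. b) < ennreal (exp b)" and R: "R > 0"
  shows "\<exists>r. 0 < r \<and> r < R \<and> (\<forall>i\<in>{1..N}. mgfX N Gam lam i (\<lambda>_. b) \<le> ennreal (exp (b - r)))"
proof -
  have ev: "eventually (\<lambda>r. mgfX N Gam lam i (\<lambda>_. b) \<le> ennreal (exp (b - r))) (at_right 0)" if i: "i \<in> {1..N}" for i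
  proof (rule eventually_from_eps)
    define q where "q = mgfX N Gam lam i (\<lambda>_. b)"
    have qb: "q < ennreal (exp b)" using b i by (simp add: q_def)
    have "ennreal (exp b) < \<infinity>" by simp
    with qb have qf: "q < \<infinity>" by (rule less_trans)
    have "ennreal (enn2real q) < ennreal (exp b)" using qb qf by simp
    then have qr: "enn2real q < exp b"
      by (simp add: ennreal_less_iff)
    define q' where "q' = max (enn2real q) (exp b / 2)"
    have q'pos: "0 < q'" by (simp add: q'_def less_max_iff_disj)
    have q'lt: "q' < exp b" using qr by (simp add: q'_def)
    define \<rho> where "\<rho> = b - ln q'"
    have "ln q' < ln (exp b)" using q'pos q'lt by (subst ln_less_cancel_iff) auto
    then have "\<rho> > 0" by (simp add: \<rho>_def)
    moreover have "q \<le> ennreal (exp (b - r))" if "0 < r" "r < \<rho>" for r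
    proof -
      have "q = ennreal (enn2real q)" using qf by simp
      also have "\<dots> \<le> ennreal q'" by (intro ennreal_leI) (simp add: q'_def)
      also have "q' = exp (b - \<rho>)" using q'pos by (simp add: \<rho>_def)
      also have "ennreal (exp (b - \<rho>)) \<le> ennreal (exp (b - r))" using that by (intro ennreal_leI) simp
      finally show ?thesis .
    qed
    ultimately show "\<exists>\<epsilon>>0. \<forall>r. 0 < r \<and> r < \<epsilon> \<longrightarrow> mgfX N Gam lam i (\<lambda>_. b) \<le> ennreal (exp (b - r))"
      unfolding q_def by blast
  qed
  have "eventually (\<lambda>r. r < R \<and> (\<forall>i\<in>{1..N}. mgfX N Gam lam i (\<lambda>_. b) \<le> ennreal (exp (b - r)))) (at_right 0)"
  proof (intro eventually_conj)
    show "eventually (\<lambda>r. r < R) (at_right 0)"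
      using R by (intro eventually_from_eps) auto
    show "eventually (\<lambda>r. \<forall>i\<in>{1..N}. mgfX N Gam lam i (\<lambda>_. b) \<le> ennreal (exp (b - r))) (at_right 0)"
      using ev by (intro eventually_ball_finite) auto
  qed
  then show ?thesis using exists_from_eventually by blast
qed


lemma exp_rec_gen:
  "ennreal (exp (a + (\<Sum>j\<in>{1..N}. \<Sum>k<\<omega> [] j. f j (shift (j,k) \<omega>)))) =
   ennreal (exp a) * (\<Prod>j\<in>{1..N}. \<Prod>k<\<omega> [] j. ennreal (exp (f j (shift (j,k) \<omega>))))"
proof -
  have "(\<Prod>j\<in>{1..N}. \<Prod>k<\<omega> [] j. ennreal (exp (f j (shift (j,k) \<omega>)))) =
        (\<Prod>j\<in>{1..N}. ennreal (\<Prod>k<\<omega> [] j. exp (f j (shift (j,k) \<omega>))))"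
    by (intro prod.cong refl prod_ennreal) simp
  also have "\<dots> = ennreal (\<Prod>j\<in>{1..N}. \<Prod>k<\<omega> [] j. exp (f j (shift (j,k) \<omega>)))"
    by (intro prod_ennreal prod_nonneg) simp
  finally show ?thesis
    by (simp add: exp_add exp_sum ennreal_mult')
qed

lemma meas_GW_of_Msp: "f \<in> borel_measurable Msp \<Longrightarrow> f \<in> borel_measurable (GW N Gam lam i)"
  by (subst measurable_cong_sets[OF sets_GW refl])

lemma F_bound:
  assumes b: "0 \<le> b" and hb: "\<forall>i\<in>{1..N}. mgfX N Gam lam i (\<lambda>_. b) \<le> ennreal (exp (b - r))"
  shows "i \<in> {1..N} \<Longrightarrow> (\<integral>\<^sup>+\<omega>. ennreal (exp (Tn N n (\<lambda>_. r) i \<omega>)) \<partial>GW N Gam lam i) \<le> ennreal (exp b)"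
proof (induction n arbitrary: i)
  case 0
  interpret prob_space "GW N Gam lam i" by (rule prob_GW)
  have "emeasure (GW N Gam lam i) UNIV = 1" using emeasure_space_1 by simp
  then show ?case using b by simp
next
  case (Suc n)
  let ?g = "\<lambda>j \<omega>. ennreal (exp (Tn N n (\<lambda>_. r) j \<omega>))"
  have mg: "\<And>j. ?g j \<in> borel_measurable Msp" by measurable
  have "(\<integral>\<^sup>+\<omega>. ennreal (exp (Tn N (Suc n) (\<lambda>_. r) i \<omega>)) \<partial>GW N Gam lam i)
      = (\<integral>\<^sup>+\<omega>. ennreal (exp r) * (\<Prod>j\<in>{1..N}. \<Prod>k<\<omega> [] j. ?g j (shift (j,k) \<omega>)) \<partial>GW N Gam lam i)"
    by (simp only: Tn.simps exp_rec_gen)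
  also have "\<dots> = ennreal (exp r) * (\<integral>\<^sup>+\<omega>. (\<Prod>j\<in>{1..N}. \<Prod>k<\<omega> [] j. ?g j (shift (j,k) \<omega>)) \<partial>GW N Gam lam i)"
    by (rule nn_integral_cmult) (rule meas_GW_of_Msp[OF meas_prodg[OF mg]])
  also have "\<dots> = ennreal (exp r) * (\<integral>\<^sup>+x. (\<Prod>j\<in>{1..N}. (\<integral>\<^sup>+\<omega>. ?g j \<omega> \<partial>GW N Gam lam j) ^ x j) \<partial>measure_pmf (offspring N Gam lam i))"
    by (simp only: branching[OF mg])
  also have "\<dots> \<le> ennreal (exp r) * (\<integral>\<^sup>+x. (\<Prod>j\<in>{1..N}. ennreal (exp b) ^ x j) \<partial>measure_pmf (offspring N Gam lam i))"
    by (intro mult_left_mono nn_integral_mono prod_mono_ennreal power_mono Suc.IH) auto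
  also have "(\<integral>\<^sup>+x. (\<Prod>j\<in>{1..N}. ennreal (exp b) ^ x j) \<partial>measure_pmf (offspring N Gam lam i)) = mgfX N Gam lam i (\<lambda>_. b)"
    unfolding mgfX_def by (simp only: prod_exp_pow)
  also have "ennreal (exp r) * mgfX N Gam lam i (\<lambda>_. b) \<le> ennreal (exp r) * ennreal (exp (b - r))"
    using hb Suc.prems by (intro mult_left_mono) auto
  also have "\<dots> = ennreal (exp b)" by (simp flip: ennreal_mult exp_add)
  finally show ?case .
qed


lemma Tn_const: "Tn N n (\<lambda>_. r) i \<omega> = r * real (card (An N n \<omega>))"
  by (simp add: Tn_sum)

lemma Hbound:
  assumes r: "r > 0"
    and Fb: "\<And>n. (\<integral>\<^sup>+\<omega>. ennreal (exp (Tn N n (\<lambda>_. r) i \<omega>)) \<partial>GW N Gam lam i) \<le> ennreal (exp b)"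
  defines "H \<equiv> \<lambda>\<omega>. (SUP n. ennreal (exp (Tn N n (\<lambda>_. r) i \<omega>)))"
  shows "(\<integral>\<^sup>+\<omega>. H \<omega> \<partial>GW N Gam lam i) \<le> ennreal (exp b)"
    and "AE \<omega> in GW N Gam lam i. finite (Aset N \<omega>)"
    and "\<And>\<omega>. finite (Aset N \<omega>) \<Longrightarrow> ennreal (exp (r * real (card (Aset N \<omega>)))) \<le> H \<omega>"
proof -
  let ?f = "\<lambda>n \<omega>. ennreal (exp (Tn N n (\<lambda>_. r) i \<omega>))"
  have inc: "incseq ?f"
  proof (rule incseq_SucI, rule le_funI)
    fix n \<omega>
    have "card (An N n \<omega>) \<le> card (An N (Suc n) \<omega>)"
      by (intro card_mono finite_An An_mono) simp
    then show "?f n \<omega> \<le> ?f (Suc n) \<omega>"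
      using r by (auto simp: Tn_const intro!: ennreal_leI)
  qed
  have mf: "\<And>n. ?f n \<in> borel_measurable (GW N Gam lam i)"
    by (rule meas_GW_of_Msp) measurable
  have "(\<integral>\<^sup>+\<omega>. H \<omega> \<partial>GW N Gam lam i) = (SUP n. \<integral>\<^sup>+\<omega>. ?f n \<omega> \<partial>GW N Gam lam i)"
    unfolding H_def by (rule nn_integral_monotone_convergence_SUP[OF inc mf])
  also have "\<dots> \<le> ennreal (exp b)" using Fb by (intro SUP_least) auto
  finally show HI: "(\<integral>\<^sup>+\<omega>. H \<omega> \<partial>GW N Gam lam i) \<le> ennreal (exp b)" .
  have mH: "H \<in> borel_measurable (GW N Gam lam i)"
    unfolding H_def using mf by measurable
  have "(\<integral>\<^sup>+\<omega>. H \<omega> \<partial>GW N Gam lam i) \<noteq> \<infinity>"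
    using le_less_trans[OF HI ennreal_less_top] by auto
  then have ae: "AE \<omega> in GW N Gam lam i. H \<omega> \<noteq> \<infinity>"
    by (rule nn_integral_PInf_AE[OF mH])
  show "AE \<omega> in GW N Gam lam i. finite (Aset N \<omega>)"
    using ae
  proof (rule AE_mp, intro AE_I2 impI)
    fix \<omega> assume Hf: "H \<omega> \<noteq> \<infinity>"
    define c where "c = enn2real (H \<omega>)"
    have "card (An N n \<omega>) \<le> nat \<lceil>c / r\<rceil>" for n
    proof -
      have "?f n \<omega> \<le> H \<omega>" unfolding H_def by (rule SUP_upper) simp
      moreover have "H \<omega> < top" using Hf by (simp add: top.not_eq_extremum)
      ultimately have "enn2real (?f n \<omega>) \<le> c" unfolding c_def by (rule enn2real_mono)
      then have "exp (Tn N n (\<lambda>_. r) i \<omega>) \<le> c" by simp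
      moreover have "1 + r * real (card (An N n \<omega>)) \<le> exp (Tn N n (\<lambda>_. r) i \<omega>)"
        unfolding Tn_const by (rule exp_ge_add_one_self)
      ultimately have "r * real (card (An N n \<omega>)) \<le> c" by simp
      then have "real (card (An N n \<omega>)) \<le> c / r" using r by (simp add: field_simps)
      also have "\<dots> \<le> real (nat \<lceil>c / r\<rceil>)" by (rule real_nat_ceiling_ge)
      finally show ?thesis by simp
    qed
    then show "finite (Aset N \<omega>)" by (rule Aset_bounded_finite)
  qed
  show "ennreal (exp (r * real (card (Aset N \<omega>)))) \<le> H \<omega>" if fin: "finite (Aset N \<omega>)" for \<omega>
  proof -
    obtain n0 where "\<forall>n\<ge>n0. An N n \<omega> = Aset N \<omega>" using Aset_finite_An[OF fin] by blast
    then have "ennreal (exp (r * real (card (Aset N \<omega>)))) = ?f n0 \<omega>" by (simp add: Tn_const)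
    also have "\<dots> \<le> H \<omega>" unfolding H_def by (rule SUP_upper) simp
    finally show ?thesis .
  qed
qed


lemma nn_pos_GW:
  assumes mf: "f \<in> borel_measurable (GW N Gam lam j)" and pos: "\<And>\<omega>. f \<omega> > 0"
  shows "(\<integral>\<^sup>+\<omega>. f \<omega> \<partial>GW N Gam lam j) \<noteq> 0"
proof
  interpret prob_space "GW N Gam lam j" by (rule prob_GW)
  assume "(\<integral>\<^sup>+\<omega>. f \<omega> \<partial>GW N Gam lam j) = 0"
  then have "AE \<omega> in GW N Gam lam j. f \<omega> = 0" by (simp add: nn_integral_0_iff_AE[OF mf])
  then have "AE \<omega> in GW N Gam lam j. False" by (rule AE_mp) (rule AE_I2, metis pos less_irrefl)
  then show False by simp
qed

lemma Tlim_le: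
  assumes fin: "finite (Aset N \<omega>)" and j: "j \<in> {1..N}" and th: "\<forall>l\<in>{1..N}. \<theta> l \<le> r"
  shows "Tlim N \<theta> j \<omega> \<le> r * real (card (Aset N \<omega>))"
proof -
  have "Tlim N \<theta> j \<omega> = (\<Sum>u\<in>Aset N \<omega>. \<theta> (ptype j u))" by (rule Tlim_eq(2)[OF fin])
  also have "\<dots> \<le> (\<Sum>u\<in>Aset N \<omega>. r)"
    using th ptype_alive[OF _ j] by (intro sum_mono) (auto simp: Aset_def)
  finally show ?thesis by (simp add: mult.commute)
qed

lemma fixed_point:
  assumes r: "r > 0"
    and Fb: "\<forall>i\<in>{1..N}. \<forall>n. (\<integral>\<^sup>+\<omega>. ennreal (exp (Tn N n (\<lambda>_. r) i \<omega>)) \<partial>GW N Gam lam i) \<le> ennreal (exp b)"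
    and th: "\<forall>l\<in>{1..N}. \<theta> l \<le> r"
    and i: "i \<in> {1..N}"
  shows "mgfW N Gam lam i \<theta> < \<infinity> \<and> mgfX N Gam lam i (\<lambda>j. Phi N Gam lam j \<theta>) < \<infinity> \<and>
         Phi N Gam lam i \<theta> = \<theta> i + phi N Gam lam i (\<lambda>j. Phi N Gam lam j \<theta>)"
proof -
  define G where "G j = (\<integral>\<^sup>+\<omega>. ennreal (exp (Tlim N \<theta> j \<omega>)) \<partial>GW N Gam lam j)" for j
  have mT: "(\<lambda>\<omega>. ennreal (exp (Tlim N \<theta> j \<omega>))) \<in> borel_measurable Msp" for j by measurable
  have finAE: "AE \<omega> in GW N Gam lam j. finite (Aset N \<omega>)" if j: "j \<in> {1..N}" for j
    using Hbound(2)[where N=N and i=j and Gam=Gam and lam=lam and b=b and r=r, OF r] Fb j by auto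
  have W_eq: "mgfW N Gam lam j \<theta> = G j" if j: "j \<in> {1..N}" for j
    unfolding mgfW_def G_def
  proof (rule nn_integral_cong_AE)
    show "AE \<omega> in GW N Gam lam j. ennreal (exp (\<Sum>l\<in>{1..N}. \<theta> l * real (Wvec N j l \<omega>))) = ennreal (exp (Tlim N \<theta> j \<omega>))"
    proof (rule AE_mp[OF finAE[OF j]], rule AE_I2, rule impI)
      fix \<omega> assume fin: "finite (Aset N \<omega>)"
      show "ennreal (exp (\<Sum>l\<in>{1..N}. \<theta> l * real (Wvec N j l \<omega>))) = ennreal (exp (Tlim N \<theta> j \<omega>))"
        by (simp only: Wsum[OF fin j] Tlim_eq(2)[OF fin])
    qed
  qed
  have G_le: "G j \<le> ennreal (exp b)" if j: "j \<in> {1..N}" for j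
  proof -
    let ?H = "\<lambda>\<omega>. (SUP n. ennreal (exp (Tn N n (\<lambda>_. r) j \<omega>)))"
    have "G j \<le> (\<integral>\<^sup>+\<omega>. ?H \<omega> \<partial>GW N Gam lam j)"
      unfolding G_def
    proof (rule nn_integral_mono_AE)
      show "AE \<omega> in GW N Gam lam j. ennreal (exp (Tlim N \<theta> j \<omega>)) \<le> ?H \<omega>"
        using finAE[OF j]
      proof (rule AE_mp, intro AE_I2 impI)
        fix \<omega> assume fin: "finite (Aset N \<omega>)"
        have "ennreal (exp (Tlim N \<theta> j \<omega>)) \<le> ennreal (exp (r * real (card (Aset N \<omega>))))"
          using Tlim_le[OF fin j th] by (intro ennreal_leI) simp
        also have "\<dots> \<le> ?H \<omega>"
          using Hbound(3)[where N=N and i=j and Gam=Gam and lam=lam and b=b and r=r, OF r _ fin] Fb j by auto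
        finally show "ennreal (exp (Tlim N \<theta> j \<omega>)) \<le> ?H \<omega>" .
      qed
    qed
    also have "\<dots> \<le> ennreal (exp b)"
      using Hbound(1)[where N=N and i=j and Gam=Gam and lam=lam and b=b and r=r, OF r] Fb j by auto
    finally show ?thesis .
  qed
  have G_fin: "G j < \<infinity>" if "j \<in> {1..N}" for j
    using le_less_trans[OF G_le[OF that] ennreal_less_top] by simp
  have G_nz: "G j \<noteq> 0" for j
    unfolding G_def by (rule nn_pos_GW[OF meas_GW_of_Msp[OF mT]]) simp
  have G_exp: "G j = ennreal (exp (Phi N Gam lam j \<theta>))" if j: "j \<in> {1..N}" for j
  proof -
    have pos: "enn2real (G j) > 0"
      using G_fin[OF j] G_nz by (simp add: enn2real_positive_iff zero_less_iff_neq_zero)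
    then show ?thesis using G_fin[OF j]
      by (simp add: Phi_def W_eq[OF j])
  qed
  have "G i = (\<integral>\<^sup>+\<omega>. ennreal (exp (\<theta> i)) * (\<Prod>j\<in>{1..N}. \<Prod>k<\<omega> [] j. ennreal (exp (Tlim N \<theta> j (shift (j,k) \<omega>)))) \<partial>GW N Gam lam i)"
    unfolding G_def
  proof (rule nn_integral_cong_AE)
    show "AE \<omega> in GW N Gam lam i. ennreal (exp (Tlim N \<theta> i \<omega>)) = ennreal (exp (\<theta> i)) * (\<Prod>j\<in>{1..N}. \<Prod>k<\<omega> [] j. ennreal (exp (Tlim N \<theta> j (shift (j,k) \<omega>))))"
    proof (rule AE_mp[OF finAE[OF i]], rule AE_I2, rule impI)
      fix \<omega> assume fin: "finite (Aset N \<omega>)"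
      show "ennreal (exp (Tlim N \<theta> i \<omega>)) = ennreal (exp (\<theta> i)) * (\<Prod>j\<in>{1..N}. \<Prod>k<\<omega> [] j. ennreal (exp (Tlim N \<theta> j (shift (j,k) \<omega>))))"
        by (simp only: Tlim_rec[OF fin, of \<theta> i] exp_rec_gen)
    qed
  qed
  also have "\<dots> = ennreal (exp (\<theta> i)) * (\<integral>\<^sup>+\<omega>. (\<Prod>j\<in>{1..N}. \<Prod>k<\<omega> [] j. ennreal (exp (Tlim N \<theta> j (shift (j,k) \<omega>)))) \<partial>GW N Gam lam i)"
    by (rule nn_integral_cmult) (rule meas_GW_of_Msp[OF meas_prodg[OF mT]])
  also have "\<dots> = ennreal (exp (\<theta> i)) * (\<integral>\<^sup>+x. (\<Prod>j\<in>{1..N}. G j ^ x j) \<partial>measure_pmf (offspring N Gam lam i))"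
    unfolding G_def by (simp only: branching[OF mT])
  also have "(\<integral>\<^sup>+x. (\<Prod>j\<in>{1..N}. G j ^ x j) \<partial>measure_pmf (offspring N Gam lam i)) = mgfX N Gam lam i (\<lambda>j. Phi N Gam lam j \<theta>)"
    unfolding mgfX_def
  proof (intro nn_integral_cong)
    fix x :: "nat \<Rightarrow> nat"
    have "(\<Prod>j\<in>{1..N}. G j ^ x j) = (\<Prod>j\<in>{1..N}. ennreal (exp (Phi N Gam lam j \<theta>)) ^ x j)"
      by (rule prod.cong[OF refl]) (simp only: G_exp)
    then show "(\<Prod>j\<in>{1..N}. G j ^ x j) = ennreal (exp (\<Sum>j\<in>{1..N}. Phi N Gam lam j \<theta> * real (x j)))"
      by (simp only: prod_exp_pow)
  qed
  finally have FP: "G i = ennreal (exp (\<theta> i)) * mgfX N Gam lam i (\<lambda>j. Phi N Gam lam j \<theta>)" .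
  define X where "X = mgfX N Gam lam i (\<lambda>j. Phi N Gam lam j \<theta>)"
  have Xf: "X < \<infinity>"
  proof (rule ccontr)
    assume "\<not> X < \<infinity>"
    then have "X = \<infinity>" by (simp add: less_top[symmetric])
    then have "G i = \<infinity>" using FP unfolding X_def by (simp add: ennreal_mult_eq_top_iff)
    then show False using G_fin[OF i] by simp
  qed
  have Xnz: "X \<noteq> 0" using FP G_nz[of i] unfolding X_def by auto
  have Xpos: "enn2real X > 0"
    using Xf Xnz by (simp add: enn2real_positive_iff zero_less_iff_neq_zero)
  have "Phi N Gam lam i \<theta> = ln (enn2real (G i))" by (simp add: Phi_def W_eq[OF i])
  also have "\<dots> = ln (exp (\<theta> i) * enn2real X)"
    using FP unfolding X_def by (simp add: enn2real_mult)
  also have "\<dots> = \<theta> i + phi N Gam lam i (\<lambda>j. Phi N Gam lam j \<theta>)"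
    using Xpos by (simp add: ln_mult phi_def X_def)
  finally show ?thesis using Xf G_fin[OF i] W_eq[OF i] unfolding X_def by simp
qed


lemma markov_tail:
  fixes M :: "'a measure" and W :: "'a \<Rightarrow> real" and g :: "'a \<Rightarrow> ennreal"
  assumes P: "prob_space M" and ta: "0 \<le> ta" and mg: "g \<in> borel_measurable M"
    and ae: "AE \<omega> in M. ennreal (exp (ta * W \<omega>)) = g \<omega>" and fin: "(\<integral>\<^sup>+\<omega>. g \<omega> \<partial>M) < \<infinity>"
  shows "measure M {\<omega> \<in> space M. W \<omega> > E + x} \<le> (enn2real (\<integral>\<^sup>+\<omega>. g \<omega> \<partial>M) * exp (- ta * E)) * exp (- ta * x)"
proof -
  let ?S = "{\<omega> \<in> space M. W \<omega> > E + x}"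
  define c where "c = exp (- ta * (E + x))"
  have c0: "0 \<le> c" by (simp add: c_def)
  have rhs: "(enn2real (\<integral>\<^sup>+\<omega>. g \<omega> \<partial>M) * exp (- ta * E)) * exp (- ta * x) = c * enn2real (\<integral>\<^sup>+\<omega>. g \<omega> \<partial>M)"
  proof -
    have "- ta * (E + x) = - ta * E + - ta * x" by (simp add: algebra_simps)
    then have "c = exp (- ta * E) * exp (- ta * x)" unfolding c_def by (simp only: exp_add)
    then show ?thesis by (simp only: mult_ac)
  qed
  show ?thesis
  proof (cases "?S \<in> sets M")
    case False
    then have m0: "measure M ?S = 0" by (rule measure_notin_sets)
    have "0 \<le> (enn2real (\<integral>\<^sup>+\<omega>. g \<omega> \<partial>M) * exp (- ta * E)) * exp (- ta * x)"
      by (intro mult_nonneg_nonneg) simp_all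
    then show ?thesis using m0 by linarith
  next
    case True
    have "emeasure M ?S = (\<integral>\<^sup>+\<omega>. indicator ?S \<omega> \<partial>M)" using True by (rule nn_integral_indicator[symmetric])
    also have "\<dots> \<le> (\<integral>\<^sup>+\<omega>. ennreal c * ennreal (exp (ta * W \<omega>)) \<partial>M)"
    proof (rule nn_integral_mono)
      fix \<omega> assume "\<omega> \<in> space M"
      show "indicator ?S \<omega> \<le> ennreal c * ennreal (exp (ta * W \<omega>))"
      proof (cases "\<omega> \<in> ?S")
        case True
        then have "ta * (E + x) \<le> ta * W \<omega>" using ta by (intro mult_left_mono) auto
        then have "0 \<le> - ta * (E + x) + ta * W \<omega>" by linarith
        then have "1 \<le> exp (- ta * (E + x) + ta * W \<omega>)"
          by (rule one_le_exp_iff[THEN iffD2])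
        then have "1 \<le> c * exp (ta * W \<omega>)" by (simp only: c_def exp_add)
        then have "ennreal 1 \<le> ennreal (c * exp (ta * W \<omega>))" by (rule ennreal_leI)
        then show ?thesis using True c0 by (simp add: ennreal_mult)
      qed simp
    qed
    also have "\<dots> = (\<integral>\<^sup>+\<omega>. ennreal c * g \<omega> \<partial>M)"
    proof (rule nn_integral_cong_AE, rule AE_mp[OF ae], rule AE_I2, rule impI)
      fix \<omega> assume "ennreal (exp (ta * W \<omega>)) = g \<omega>"
      then show "ennreal c * ennreal (exp (ta * W \<omega>)) = ennreal c * g \<omega>" by simp
    qed
    also have "\<dots> = ennreal c * (\<integral>\<^sup>+\<omega>. g \<omega> \<partial>M)" by (rule nn_integral_cmult[OF mg])
    finally have le: "emeasure M ?S \<le> ennreal c * (\<integral>\<^sup>+\<omega>. g \<omega> \<partial>M)" .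
    have "ennreal c * (\<integral>\<^sup>+\<omega>. g \<omega> \<partial>M) < \<infinity>" using fin by (simp add: ennreal_mult_less_top)
    then have le2: "enn2real (emeasure M ?S) \<le> enn2real (ennreal c * (\<integral>\<^sup>+\<omega>. g \<omega> \<partial>M))"
      using le by (intro enn2real_mono) auto
    have "measure M ?S = enn2real (emeasure M ?S)" by (simp only: measure_def)
    also have "\<dots> \<le> enn2real (ennreal c * (\<integral>\<^sup>+\<omega>. g \<omega> \<partial>M))" by (rule le2)
    also have "\<dots> = c * enn2real (\<integral>\<^sup>+\<omega>. g \<omega> \<partial>M)" by (simp only: enn2real_mult enn2real_ennreal[OF c0])
    also have "\<dots> = (enn2real (\<integral>\<^sup>+\<omega>. g \<omega> \<partial>M) * exp (- ta * E)) * exp (- ta * x)" by (rule rhs[symmetric])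
    finally show ?thesis .
  qed
qed

theorem mainTheorem8:
  fixes N :: nat and Gam :: "nat \<Rightarrow> real"
    and lam :: "nat \<Rightarrow> (nat \<times> real) set pmf" and R :: real
  assumes Gam_pos: "\<forall>j\<in>{1..N}. Gam j > 0"
    and nbhd: "\<forall>i\<in>{1..N}. \<forall>v\<in>set_pmf (lam i).
        v \<subseteq> {1..N} \<times> {..<0} \<and>
        (\<forall>j\<in>{1..N}. psec j v \<in> sets borel \<and> bounded (psec j v))"
    and subcrit: "\<forall>i\<in>{1..N}. (\<integral>\<^sup>+ v. ennreal (Pv N Gam v) \<partial>measure_pmf (lam i)) < 1"
    and R_pos: "R > 0"
    and expmom: "\<forall>\<theta>. (\<forall>j\<in>{1..N}. 0 < \<theta> j \<and> \<theta> j < R) \<longrightarrow>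
        (\<forall>i\<in>{1..N}. mgfX N Gam lam i \<theta> < \<infinity>)"
  shows "\<exists>r. 0 < r \<and> r < R \<and>
     (\<forall>\<theta>. (\<forall>j\<in>{1..N}. \<bar>\<theta> j\<bar> < r) \<longrightarrow>
        (\<forall>i\<in>{1..N}. mgfW N Gam lam i \<theta> < \<infinity> \<and>
           mgfX N Gam lam i (\<lambda>j. Phi N Gam lam j \<theta>) < \<infinity> \<and>
           Phi N Gam lam i \<theta> = \<theta> i + phi N Gam lam i (\<lambda>j. Phi N Gam lam j \<theta>))) \<and>
     (\<forall>ta. 0 \<le> ta \<and> ta < r \<longrightarrow>
        (\<forall>i\<in>{1..N}. \<exists>c0. \<forall>x>0.
           measure (GW N Gam lam i)
             {\<omega> \<in> space (GW N Gam lam i).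
                real (Wtot N i \<omega>) > prob_space.expectation (GW N Gam lam i) (\<lambda>\<omega>. real (Wtot N i \<omega>)) + x}
           \<le> c0 * exp (- ta * x)))"
proof -
  obtain b where b: "0 < b" "b < R" "\<forall>i\<in>{1..N}. mgfX N Gam lam i (\<lambda>_. b) < ennreal (exp b)"
    using choose_b[OF Gam_pos subcrit R_pos expmom] by blast
  obtain r where r: "0 < r" "r < R" "\<forall>i\<in>{1..N}. mgfX N Gam lam i (\<lambda>_. b) \<le> ennreal (exp (b - r))"
    using choose_r[OF b(3) R_pos] by blast
  have Fb: "\<forall>i\<in>{1..N}. \<forall>n. (\<integral>\<^sup>+\<omega>. ennreal (exp (Tn N n (\<lambda>_. r) i \<omega>)) \<partial>GW N Gam lam i) \<le> ennreal (exp b)"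
  proof (intro ballI allI)
    fix i n assume i: "i \<in> {1..N}"
    show "(\<integral>\<^sup>+\<omega>. ennreal (exp (Tn N n (\<lambda>_. r) i \<omega>)) \<partial>GW N Gam lam i) \<le> ennreal (exp b)"
      by (rule F_bound[where b=b and N=N and Gam=Gam and lam=lam and r=r, OF less_imp_le[OF b(1)] r(3) i])
  qed
  have part1: "\<forall>\<theta>. (\<forall>j\<in>{1..N}. \<bar>\<theta> j\<bar> < r) \<longrightarrow>
        (\<forall>i\<in>{1..N}. mgfW N Gam lam i \<theta> < \<infinity> \<and>
           mgfX N Gam lam i (\<lambda>j. Phi N Gam lam j \<theta>) < \<infinity> \<and>
           Phi N Gam lam i \<theta> = \<theta> i + phi N Gam lam i (\<lambda>j. Phi N Gam lam j \<theta>))"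
  proof (intro allI impI ballI)
    fix \<theta> :: "nat \<Rightarrow> real" and i assume th: "\<forall>j\<in>{1..N}. \<bar>\<theta> j\<bar> < r" and i: "i \<in> {1..N}"
    have "\<forall>l\<in>{1..N}. \<theta> l \<le> r" using th by (auto simp: abs_less_iff less_imp_le)
    then show "mgfW N Gam lam i \<theta> < \<infinity> \<and>
           mgfX N Gam lam i (\<lambda>j. Phi N Gam lam j \<theta>) < \<infinity> \<and>
           Phi N Gam lam i \<theta> = \<theta> i + phi N Gam lam i (\<lambda>j. Phi N Gam lam j \<theta>)"
      using fixed_point[OF r(1) Fb _ i] by blast
  qed
  have part2: "\<forall>ta. 0 \<le> ta \<and> ta < r \<longrightarrow>
        (\<forall>i\<in>{1..N}. \<exists>c0. \<forall>x>0.
           measure (GW N Gam lam i)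
             {\<omega> \<in> space (GW N Gam lam i).
                real (Wtot N i \<omega>) > prob_space.expectation (GW N Gam lam i) (\<lambda>\<omega>. real (Wtot N i \<omega>)) + x}
           \<le> c0 * exp (- ta * x))"
  proof (intro allI impI ballI)
    fix ta :: real and i assume ta: "0 \<le> ta \<and> ta < r" and i: "i \<in> {1..N}"
    let ?E = "prob_space.expectation (GW N Gam lam i) (\<lambda>\<omega>. real (Wtot N i \<omega>))"
    let ?g = "\<lambda>\<omega>. ennreal (exp (Tlim N (\<lambda>_. ta) i \<omega>))"
    have mg: "?g \<in> borel_measurable (GW N Gam lam i)"
      by (rule meas_GW_of_Msp) measurable
    have finAE: "AE \<omega> in GW N Gam lam i. finite (Aset N \<omega>)"
      using Hbound(2)[where N=N and i=i and Gam=Gam and lam=lam and b=b and r=r, OF r(1)] Fb i by auto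
    have ae: "AE \<omega> in GW N Gam lam i. ennreal (exp (ta * real (Wtot N i \<omega>))) = ?g \<omega>"
    proof (rule AE_mp[OF finAE], rule AE_I2, rule impI)
      fix \<omega> assume fin: "finite (Aset N \<omega>)"
      have "ta * real (Wtot N i \<omega>) = (\<Sum>j\<in>{1..N}. (\<lambda>_. ta) j * real (Wvec N i j \<omega>))"
        by (simp only: Wtot_def of_nat_sum sum_distrib_left)
      also have "\<dots> = Tlim N (\<lambda>_. ta) i \<omega>"
        by (simp only: Wsum[OF fin i] Tlim_eq(2)[OF fin])
      finally show "ennreal (exp (ta * real (Wtot N i \<omega>))) = ?g \<omega>" by simp
    qed
    have th: "\<And>j. j \<in> {1..N} \<Longrightarrow> \<bar>ta\<bar> < r" using ta by simp
    have "mgfW N Gam lam i (\<lambda>_. ta) < \<infinity>"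
      using part1[rule_format, of "\<lambda>_. ta", OF th i] by (rule conjunct1)
    moreover have "mgfW N Gam lam i (\<lambda>_. ta) = (\<integral>\<^sup>+\<omega>. ?g \<omega> \<partial>GW N Gam lam i)"
      unfolding mgfW_def
    proof (rule nn_integral_cong_AE, rule AE_mp[OF ae], rule AE_I2, rule impI)
      fix \<omega> assume "ennreal (exp (ta * real (Wtot N i \<omega>))) = ?g \<omega>"
      moreover have "(\<Sum>j\<in>{1..N}. ta * real (Wvec N i j \<omega>)) = ta * real (Wtot N i \<omega>)"
        by (simp only: Wtot_def of_nat_sum sum_distrib_left)
      ultimately show "ennreal (exp (\<Sum>j\<in>{1..N}. ta * real (Wvec N i j \<omega>))) = ?g \<omega>"
        by (simp only:)
    qed
    ultimately have fin: "(\<integral>\<^sup>+\<omega>. ?g \<omega> \<partial>GW N Gam lam i) < \<infinity>" by simp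
    show "\<exists>c0. \<forall>x>0. measure (GW N Gam lam i)
             {\<omega> \<in> space (GW N Gam lam i). real (Wtot N i \<omega>) > ?E + x} \<le> c0 * exp (- ta * x)"
    proof (intro exI allI impI)
      fix x :: real
      show "measure (GW N Gam lam i) {\<omega> \<in> space (GW N Gam lam i). real (Wtot N i \<omega>) > ?E + x}
          \<le> (enn2real (\<integral>\<^sup>+\<omega>. ?g \<omega> \<partial>GW N Gam lam i) * exp (- ta * ?E)) * exp (- ta * x)"
        by (rule markov_tail[OF prob_GW _ mg ae fin]) (use ta in simp)
    qed
  qed
  show ?thesis
    apply (rule exI[of _ r])
    apply (rule conjI, rule r(1))
    apply (rule conjI, rule r(2))
    apply (rule conjI, rule part1)
    apply (rule part2)
    done
qed


end
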